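(* For every IFA $\mathcal{A}$ with $n$ states there exists a mod-2-multiplicity automaton $\mathcal{A}'$ with at most $n$ states such that $L_{\mathcal{A}}(w) = L_{\mathcal{A}'}(w)$ for all $w \in \Sigma^*$ (identifying $0,1 \in \mathbb{Q}$ with $0,1 \in \mathbb{Z}_2$).
   Context: For a field $\mathbb{F}$, an $\mathbb{F}$-weighted automaton $\mathcal{A} = (Q, \Sigma, M, \alpha, \eta)$ consists of a finite state set $Q$, finite alphabet $\Sigma$, $M : \Sigma \to \mathbb{F}^{Q\times Q}$, initial row vector $\alpha \in \mathbb{F}^Q$, final column vector $\eta \in \mathbb{F}^Q$; with $M(a_1\cdots a_k) = M(a_1)\cdots M(a_k)$, it assigns $L_\mathcal{A}(w) = \alpha M(w)\eta \in \mathbb{F}$ to each $w \in \Sigma^*$. A $\mathbb{Q}$-weighted automaton is an IFA if $L_\mathcal{A}(w) \in \{0,1\}$ for all $w \in \Sigma^*$. A mod-2-multiplicity automaton is a $\mathbb{Z}_2$-weighted automaton, where $\mathbb{Z}_2 = \{0,1\}$ is the field with two elements; it accepts $w$ iff $L_\mathcal{A}(w) = 1$. The number of states is $|Q|$. *)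

theory Defs
  imports "Jordan_Normal_Form.Matrix" "HOL-Library.Z2"
begin

definition wa_wf :: "nat \<Rightarrow> ('a \<Rightarrow> 'f::field mat) \<Rightarrow> 'f vec \<Rightarrow> 'f vec \<Rightarrow> bool" where
  "wa_wf n M \<alpha> \<eta> \<longleftrightarrow> (\<forall>a. M a \<in> carrier_mat n n) \<and> \<alpha> \<in> carrier_vec n \<and> \<eta> \<in> carrier_vec n"

definition wa_word_mat :: "nat \<Rightarrow> ('a \<Rightarrow> 'f::field mat) \<Rightarrow> 'a list \<Rightarrow> 'f mat" where
  "wa_word_mat n M w = foldr (\<lambda>a B. M a * B) w (1\<^sub>m n)"

definition wa_lang :: "nat \<Rightarrow> ('a \<Rightarrow> 'f::field mat) \<Rightarrow> 'f vec \<Rightarrow> 'f vec \<Rightarrow> 'a list \<Rightarrow> 'f" where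
  "wa_lang n M \<alpha> \<eta> w = \<alpha> \<bullet> (wa_word_mat n M w *\<^sub>v \<eta>)"

definition is_IFA :: "nat \<Rightarrow> ('a \<Rightarrow> rat mat) \<Rightarrow> rat vec \<Rightarrow> rat vec \<Rightarrow> bool" where
  "is_IFA n M \<alpha> \<eta> \<longleftrightarrow> wa_wf n M \<alpha> \<eta> \<and> (\<forall>w. wa_lang n M \<alpha> \<eta> w \<in> {0, 1})"

end

theory Submission
  imports Defs "Jordan_Normal_Form.Determinant"
begin

lemma wm_carrier: assumes "\<forall>a. M a \<in> carrier_mat n n"
  shows "wa_word_mat n M w \<in> carrier_mat n n"
  using assms by (induction w) (auto simp: wa_word_mat_def intro!: mult_carrier_mat)

lemma wm_cons: "wa_word_mat n M (a#w) = M a * wa_word_mat n M w"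
  by (simp add: wa_word_mat_def)

lemma wm_append: assumes "\<forall>a. M a \<in> carrier_mat n n"
  shows "wa_word_mat n M (u@v) = wa_word_mat n M u * wa_word_mat n M v"
proof (induction u)
  case Nil
  show ?case using wm_carrier[OF assms, of v] by (simp add: wa_word_mat_def)
next
  case (Cons a u)
  show ?case using wm_carrier[OF assms] assms Cons
    by (simp add: wm_cons assoc_mult_mat[of _ n n _ n _ n])
qed

lemma bit_of_int: "(of_int k :: bit) = (if even k then 0 else 1)"
proof -
  have "k = 2*(k div 2) + k mod 2" by simp
  then have "(of_int k :: bit) = 2 * of_int (k div 2) + of_int (k mod 2)"
    by (metis of_int_add of_int_mult of_int_numeral)
  also have "\<dots> = of_int (k mod 2)" by simp
  finally show ?thesis by (cases "even k") (auto simp: even_iff_mod_2_eq_zero odd_iff_mod_2_eq_one)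
qed


definition rowP :: "nat \<Rightarrow> ('a \<Rightarrow> rat mat) \<Rightarrow> rat vec \<Rightarrow> 'a list \<Rightarrow> nat \<Rightarrow> rat" where
  "rowP n M \<alpha> u j = (\<Sum>i<n. \<alpha>$i * wa_word_mat n M u $$ (i,j))"

lemma lang_split: assumes wf: "wa_wf n M \<alpha> \<eta>"
  shows "wa_lang n M \<alpha> \<eta> (u@v) = (\<Sum>j<n. rowP n M \<alpha> u j * (wa_word_mat n M v *\<^sub>v \<eta>)$j)"
proof -
  have Mc: "\<forall>a. M a \<in> carrier_mat n n" and ac: "\<alpha> \<in> carrier_vec n" and ec: "\<eta> \<in> carrier_vec n"
    using wf by (auto simp: wa_wf_def)
  define A where "A = wa_word_mat n M u"
  define y where "y = wa_word_mat n M v *\<^sub>v \<eta>"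
  have Ac: "A \<in> carrier_mat n n" unfolding A_def by (rule wm_carrier[OF Mc])
  have yc: "y \<in> carrier_vec n" unfolding y_def using wm_carrier[OF Mc] ec by (metis mult_mat_vec_carrier)
  have "wa_lang n M \<alpha> \<eta> (u@v) = \<alpha> \<bullet> (A *\<^sub>v y)"
    unfolding wa_lang_def wm_append[OF Mc] A_def y_def
    using wm_carrier[OF Mc] ec by (subst assoc_mult_mat_vec[of _ n n _ n]) auto
  also have "\<dots> = (\<Sum>i<n. \<alpha>$i * (\<Sum>j<n. A$$(i,j) * y$j))"
    using Ac yc unfolding scalar_prod_def
    by (auto simp: row_def scalar_prod_def lessThan_atLeast0 intro!: sum.cong)
  also have "\<dots> = (\<Sum>i<n. \<Sum>j<n. \<alpha>$i * A$$(i,j) * y$j)"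
    by (simp add: sum_distrib_left mult.assoc)
  also have "\<dots> = (\<Sum>j<n. \<Sum>i<n. \<alpha>$i * A$$(i,j) * y$j)"
    by (rule sum.swap)
  also have "\<dots> = (\<Sum>j<n. rowP n M \<alpha> u j * y$j)"
    by (simp add: rowP_def A_def sum_distrib_right)
  finally show ?thesis unfolding y_def .
qed

lemma common_denom: fixes x :: "nat \<Rightarrow> rat"
  shows "\<exists>D::int. D > 0 \<and> (\<forall>i<k. \<exists>z. x i * of_int D = of_int z)"
proof (induction k)
  case 0 show ?case by (rule exI[of _ 1]) auto
next
  case (Suc k)
  then obtain D where D: "D > 0" "\<forall>i<k. \<exists>z. x i * of_int D = of_int z" by blast
  obtain p q where pq: "quotient_of (x k) = (p, q)" by (cases "quotient_of (x k)")
  have q: "q > 0" using quotient_of_denom_pos[OF pq] .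
  have xk: "x k = of_int p / of_int q" using quotient_of_div[OF pq] .
  show ?case
  proof (rule exI[of _ "D*q"], intro conjI allI impI)
    show "D*q > 0" using D q by simp
    fix i assume "i < Suc k"
    show "\<exists>z. x i * of_int (D*q) = of_int z"
    proof (cases "i = k")
      case True
      show ?thesis using q True xk by (intro exI[of _ "p*D"]) auto
    next
      case False
      then obtain z where "x i * of_int D = of_int z" using D \<open>i < Suc k\<close> by fastforce
      then show ?thesis by (intro exI[of _ "z*q"]) (simp add: mult.assoc[symmetric])
    qed
  qed
qed

lemma abs_div2_less: "(c::int) \<noteq> 0 \<Longrightarrow> even c \<Longrightarrow> \<bar>c div 2\<bar> < \<bar>c\<bar>"
  by (auto elim!: evenE simp: abs_mult)

lemma odd_sol: fixes Q :: "(nat \<Rightarrow> int) \<Rightarrow> bool"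
  assumes "Q c" "\<exists>i<k. c i \<noteq> 0" "\<And>c. Q c \<Longrightarrow> \<forall>i<k. even (c i) \<Longrightarrow> Q (\<lambda>i. c i div 2)"
  shows "\<exists>c. Q c \<and> (\<exists>i<k. odd (c i))"
  using assms(1,2)
proof (induction "\<Sum>i<k. nat \<bar>c i\<bar>" arbitrary: c rule: less_induct)
  case less
  show ?case
  proof (cases "\<exists>i<k. odd (c i)")
    case True with less show ?thesis by blast
  next
    case False
    let ?c = "\<lambda>i. c i div 2"
    have Q: "Q ?c" using assms(3) less False by blast
    obtain i0 where i0: "i0 < k" "c i0 \<noteq> 0" using less.prems(2) by blast
    have nz: "\<exists>i<k. ?c i \<noteq> 0" using i0 False by (intro exI[of _ i0]) (auto elim!: evenE)
    have lt: "(\<Sum>i<k. nat \<bar>?c i\<bar>) < (\<Sum>i<k. nat \<bar>c i\<bar>)"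
    proof (rule sum_strict_mono_ex1)
      show "finite {..<k}" by simp
      show "\<forall>x\<in>{..<k}. nat \<bar>c x div 2\<bar> \<le> nat \<bar>c x\<bar>" by (auto simp: nat_le_eq_zle) 
      show "\<exists>a\<in>{..<k}. nat \<bar>c a div 2\<bar> < nat \<bar>c a\<bar>" using i0 False abs_div2_less by (intro bexI[of _ i0]) auto
    qed
    show ?thesis by (rule less.hyps[of ?c]) (use lt Q nz in auto)
  qed
qed


definition g2 :: "nat \<Rightarrow> ('a \<Rightarrow> rat mat) \<Rightarrow> rat vec \<Rightarrow> rat vec \<Rightarrow> 'a list \<Rightarrow> bit" where
  "g2 n M \<alpha> \<eta> w = (if wa_lang n M \<alpha> \<eta> w = 1 then 1 else 0)"

lemma dep:
  assumes ifa: "is_IFA n M \<alpha> \<eta>" and k: "n < k"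
  shows "\<exists>c::nat\<Rightarrow>bit. (\<exists>i<k. c i \<noteq> 0) \<and> (\<forall>v. (\<Sum>i<k. c i * g2 n M \<alpha> \<eta> (U i @ v)) = 0)"
proof -
  have wf: "wa_wf n M \<alpha> \<eta>" and f01: "\<And>w. wa_lang n M \<alpha> \<eta> w \<in> {0,1}"
    using ifa by (auto simp: is_IFA_def)
  let ?P = "\<lambda>i j. rowP n M \<alpha> (U i) j"
  define B where "B = mat\<^sub>r k k (\<lambda>j. if j = n then 0\<^sub>v k else vec k (\<lambda>i. ?P i j))"
  have Bc: "B \<in> carrier_mat k k" unfolding B_def by auto
  have "det B = 0" unfolding B_def by (rule det_row_0[OF k]) auto
  then obtain x where x: "x \<in> carrier_vec k" "x \<noteq> 0\<^sub>v k" "B *\<^sub>v x = 0\<^sub>v k"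
    using det_0_iff_vec_prod_zero_field[OF Bc] by blast
  have eqs: "(\<Sum>i<k. x$i * ?P i j) = 0" if j: "j < n" for j
  proof -
    have "(B *\<^sub>v x) $ j = 0" using j k by (simp only: x(3)) simp
    moreover have "(B *\<^sub>v x) $ j = (\<Sum>i<k. ?P i j * x$i)"
      using x(1) j k unfolding B_def
      by (auto simp: scalar_prod_def lessThan_atLeast0 intro!: sum.cong)
    ultimately show ?thesis by (simp add: mult.commute)
  qed
  obtain i0 where i0: "i0 < k" "x$i0 \<noteq> 0"
  proof -
    have "\<exists>i<k. x$i \<noteq> 0"
    proof (rule ccontr)
      assume "\<not> ?thesis"
      then have "x = 0\<^sub>v k" using x by (intro eq_vecI) auto
      then show False using x by simp
    qed
    then show ?thesis using that by blast
  qed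
  obtain D :: int where D: "D > 0" "\<forall>i<k. \<exists>z. x$i * of_int D = of_int z"
    using common_denom[where x="\<lambda>i. x$i" and k=k] by blast
  define c0 where "c0 i = (SOME z. x$i * of_int D = of_int z)" for i
  have c0: "of_int (c0 i) = x$i * of_int D" if "i < k" for i
    using someI_ex[OF D(2)[rule_format, OF that]] unfolding c0_def by simp
  define Q where "Q c \<longleftrightarrow> (\<forall>j<n. (\<Sum>i<k. of_int (c i) * ?P i j) = 0)" for c :: "nat \<Rightarrow> int"
  have Qc0: "Q c0" unfolding Q_def
  proof (intro allI impI)
    fix j assume j: "j < n"
    have "(\<Sum>i<k. of_int (c0 i) * ?P i j) = (\<Sum>i<k. of_int D * (x$i * ?P i j))"
      by (rule sum.cong) (auto simp: c0 mult_ac)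
    also have "\<dots> = 0" using eqs[OF j] by (simp add: sum_distrib_left[symmetric])
    finally show "(\<Sum>i<k. of_int (c0 i) * ?P i j) = 0" .
  qed
  have nz0: "\<exists>i<k. c0 i \<noteq> 0" using i0 c0[OF i0(1)] D(1) by (intro exI[of _ i0]) auto
  have half: "Q (\<lambda>i. c i div 2)" if "Q c" "\<forall>i<k. even (c i)" for c
    unfolding Q_def
  proof (intro allI impI)
    fix j assume j: "j < n"
    have "(\<Sum>i<k. of_int (c i) * ?P i j) = (\<Sum>i<k. 2 * (of_int (c i div 2) * ?P i j))"
      by (rule sum.cong) (use that(2) in \<open>auto elim!: evenE\<close>)
    then have "2 * (\<Sum>i<k. of_int (c i div 2) * ?P i j) = 0"
      using that(1) j unfolding Q_def by (simp add: sum_distrib_left)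
    then show "(\<Sum>i<k. of_int (c i div 2) * ?P i j) = 0" by simp
  qed
  obtain c where Qc: "Q c" and odd: "\<exists>i<k. odd (c i)"
    using odd_sol[of Q c0 k, OF Qc0 nz0 half] by blast
  define b :: "'a list \<Rightarrow> int" where "b w = (if wa_lang n M \<alpha> \<eta> w = 1 then 1 else 0)" for w
  have fb: "wa_lang n M \<alpha> \<eta> w = of_int (b w)" for w using f01[of w] unfolding b_def by auto
  have gb: "g2 n M \<alpha> \<eta> w = of_int (b w)" for w unfolding g2_def b_def by simp
  show ?thesis
  proof (intro exI[of _ "\<lambda>i. of_int (c i)"] conjI allI)
    show "\<exists>i<k. (of_int (c i) :: bit) \<noteq> 0" using odd by (auto simp: bit_of_int)
    fix v
    let ?y = "wa_word_mat n M v *\<^sub>v \<eta>"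
    have "(\<Sum>i<k. of_int (c i) * wa_lang n M \<alpha> \<eta> (U i @ v))
        = (\<Sum>i<k. \<Sum>j<n. of_int (c i) * ?P i j * ?y$j)"
      by (simp add: lang_split[OF wf] sum_distrib_left mult.assoc)
    also have "\<dots> = (\<Sum>j<n. (\<Sum>i<k. of_int (c i) * ?P i j) * ?y$j)"
      by (subst sum.swap) (simp add: sum_distrib_right)
    also have "\<dots> = 0" using Qc unfolding Q_def by simp
    finally have "rat_of_int (\<Sum>i<k. c i * b (U i @ v)) = 0" by (simp add: fb)
    then have "(\<Sum>i<k. c i * b (U i @ v)) = 0" by (simp only: of_int_eq_0_iff)
    then have "(of_int (\<Sum>i<k. c i * b (U i @ v)) :: bit) = 0" by simp
    then show "(\<Sum>i<k. of_int (c i) * g2 n M \<alpha> \<eta> (U i @ v)) = 0" by (simp add: gb)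
  qed
qed


lemma bit_add_eq0: "(x::bit) + y = 0 \<Longrightarrow> y = x"
proof -
  assume h: "x + y = 0"
  have yy: "y + y = 0"
  proof -
    have "y + y = 2 * y" by (simp only: mult_2)
    also have "\<dots> = 0" by simp
    finally show ?thesis .
  qed
  have "y = y + (x + y)" using h by simp
  also have "\<dots> = x + (y + y)" by (simp only: add_ac)
  also have "\<dots> = x" using yy by simp
  finally show ?thesis .
qed

theorem proposition6:
  fixes n :: nat and M :: "'a::finite \<Rightarrow> rat mat" and \<alpha> \<eta> :: "rat vec"
  assumes "is_IFA n M \<alpha> \<eta>"
  shows "\<exists>m M' \<alpha>' \<eta>'. m \<le> n \<and> wa_wf m (M' :: 'a \<Rightarrow> bit mat) \<alpha>' \<eta>' \<and>
           (\<forall>w. wa_lang n M \<alpha> \<eta> w = (if wa_lang m M' \<alpha>' \<eta>' w = 1 then 1 else 0))"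
proof -
  let ?g = "g2 n M \<alpha> \<eta>"
  define indep where "indep K U \<longleftrightarrow> (\<forall>c::nat\<Rightarrow>bit. (\<forall>v. (\<Sum>i<K. c i * ?g (U i @ v)) = 0) \<longrightarrow> (\<forall>i<K. c i = 0))"
    for K and U :: "nat \<Rightarrow> 'a list"
  define S where "S = {K. \<exists>U. indep K U}"
  have Sle: "S \<subseteq> {..n}"
  proof
    fix K assume "K \<in> S"
    then obtain U where U: "indep K U" unfolding S_def by blast
    show "K \<in> {..n}"
    proof (rule ccontr)
      assume "K \<notin> {..n}"
      then have "n < K" by simp
      from dep[OF assms this, of U] obtain c where "\<exists>i<K. c i \<noteq> 0" "\<forall>v. (\<Sum>i<K. c i * ?g (U i @ v)) = 0"
        by blast
      then show False using U unfolding indep_def by blast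
    qed
  qed
  have finS: "finite S" using Sle finite_subset by blast
  have S0: "0 \<in> S" unfolding S_def indep_def by auto
  define K where "K = Max S"
  have KS: "K \<in> S" unfolding K_def using finS S0 by (intro Max_in) auto
  have Kn: "K \<le> n" using KS Sle by auto
  have K1: "Suc K \<notin> S" using finS K_def Max_ge Suc_n_not_le_n by metis
  obtain U where U: "indep K U" using KS unfolding S_def by blast
  have expand: "\<exists>d. \<forall>v. ?g (w @ v) = (\<Sum>i<K. d i * ?g (U i @ v))" for w
  proof -
    have "\<not> indep (Suc K) (U(K:=w))" using K1 unfolding S_def by blast
    then obtain c where c0: "\<forall>v. (\<Sum>i<Suc K. c i * ?g ((U(K:=w)) i @ v)) = 0"
      and cnz: "\<exists>i<Suc K. c i \<noteq> 0" unfolding indep_def by blast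
    have split: "(\<Sum>i<K. c i * ?g (U i @ v)) + c K * ?g (w @ v) = 0" for v
    proof -
      have "(\<Sum>i<Suc K. c i * ?g ((U(K:=w)) i @ v)) = (\<Sum>i<K. c i * ?g (U i @ v)) + c K * ?g (w @ v)"
        by (simp add: sum.lessThan_Suc)
      then show ?thesis using c0 by simp
    qed
    have cK: "c K = 1"
    proof (rule ccontr)
      assume "c K \<noteq> 1"
      then have "c K = 0" by simp
      then have "\<forall>v. (\<Sum>i<K. c i * ?g (U i @ v)) = 0" using split by simp
      then have "\<forall>i<K. c i = 0" using U unfolding indep_def by blast
      then show False using cnz \<open>c K = 0\<close> less_Suc_eq by auto
    qed
    show ?thesis
    proof (intro exI[of _ c] allI)
      fix v
      show "?g (w @ v) = (\<Sum>i<K. c i * ?g (U i @ v))"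
        using bit_add_eq0[OF split[of v]] by (simp only: cK mult_1)
    qed
  qed
  define coef where "coef w = (SOME d. \<forall>v. ?g (w @ v) = (\<Sum>i<K. d i * ?g (U i @ v)))" for w
  have coef: "?g (w @ v) = (\<Sum>i<K. coef w i * ?g (U i @ v))" for w v
    using someI_ex[OF expand[of w]] unfolding coef_def by blast
  define M' :: "'a \<Rightarrow> bit mat" where "M' a = mat K K (\<lambda>(i,j). coef (U i @ [a]) j)" for a
  define \<alpha>' where "\<alpha>' = vec K (\<lambda>j. coef [] j)"
  define \<eta>' where "\<eta>' = vec K (\<lambda>j. ?g (U j))"
  have M'c: "\<forall>a. M' a \<in> carrier_mat K K" unfolding M'_def by auto
  have wf': "wa_wf K M' \<alpha>' \<eta>'" unfolding wa_wf_def \<alpha>'_def \<eta>'_def using M'c by auto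
  have yw: "wa_word_mat K M' w *\<^sub>v \<eta>' = vec K (\<lambda>i. ?g (U i @ w))" for w
  proof (induction w)
    case Nil
    show ?case unfolding \<eta>'_def by (simp add: wa_word_mat_def)
  next
    case (Cons a w)
    have "wa_word_mat K M' (a # w) *\<^sub>v \<eta>' = M' a *\<^sub>v (wa_word_mat K M' w *\<^sub>v \<eta>')"
      unfolding wm_cons using M'c wm_carrier[OF M'c] unfolding \<eta>'_def
      by (subst assoc_mult_mat_vec[of _ K K _ K]) auto
    also have "\<dots> = vec K (\<lambda>i. ?g (U i @ a # w))"
    proof (rule eq_vecI)
      fix i assume "i < dim_vec (vec K (\<lambda>i. ?g (U i @ a # w)))"
      then have i: "i < K" by simp
      have "(M' a *\<^sub>v vec K (\<lambda>i. ?g (U i @ w))) $ i = (\<Sum>j<K. coef (U i @ [a]) j * ?g (U j @ w))"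
        using i unfolding M'_def by (auto simp: scalar_prod_def lessThan_atLeast0 intro!: sum.cong)
      also have "\<dots> = ?g ((U i @ [a]) @ w)" by (rule coef[symmetric])
      finally show "(M' a *\<^sub>v (wa_word_mat K M' w *\<^sub>v \<eta>')) $ i = vec K (\<lambda>i. ?g (U i @ a # w)) $ i"
        using i Cons by simp
    qed (simp add: M'_def)
    finally show ?case .
  qed
  have lang': "wa_lang K M' \<alpha>' \<eta>' w = ?g w" for w
  proof -
    have "wa_lang K M' \<alpha>' \<eta>' w = (\<Sum>j<K. coef [] j * ?g (U j @ w))"
      unfolding wa_lang_def yw \<alpha>'_def by (auto simp: scalar_prod_def lessThan_atLeast0)
    also have "\<dots> = ?g ([] @ w)" by (rule coef[symmetric])
    finally show ?thesis by simp
  qed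
  have f01: "\<And>w. wa_lang n M \<alpha> \<eta> w \<in> {0,1}" using assms by (auto simp: is_IFA_def)
  show ?thesis
  proof (intro exI conjI allI)
    show "K \<le> n" by (rule Kn)
    show "wa_wf K M' \<alpha>' \<eta>'" by (rule wf')
    fix w
    show "wa_lang n M \<alpha> \<eta> w = (if wa_lang K M' \<alpha>' \<eta>' w = 1 then 1 else 0)"
      unfolding lang' g2_def using f01[of w] by auto
  qed
qed

end
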